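(* For any real numbers $0<\gamma\le L$ and any integer $n\ge 1$, there exist a domain $\mathcal{X}\times\mathcal{Y}$, a distribution $P$ supported on a set $\mathcal{Z}\subset\mathcal{X}\times\mathcal{Y}$, a loss function $\ell:\mathcal{Y}\times\mathcal{Y}\to[0,L]$ (i.e. non-negative and $L$-bounded), and a uniformly $\gamma$-stable learning algorithm $\mathcal{A}:\mathcal{Z}^n\to\mathcal{Y}^{\mathcal{X}}$, such that if $\mathcal{S}$ is a training set of $n$ i.i.d. samples from $P$, then with probability at least $3/64$ over the draw of $\mathcal{S}$, \[ R_{\rm pop}(\mathcal{A}_\mathcal{S})-R_{\rm emp}(\mathcal{A}_\mathcal{S})\ge \frac{\gamma}{4}+\frac{L}{32\sqrt{n}}. \]
   Context: A learning algorithm $\mathcal{A}$ is a (deterministic) map sending a training set $\mathcal{S}=\{(x_1,y_1),\ldots,(x_n,y_n)\}$ to a function $\mathcal{A}_\mathcal{S}:\mathcal{X}\to\mathcal{Y}$. For a non-negative loss $\ell:\mathcal{Y}\times\mathcal{Y}\to\mathbb{R}$ and data distribution $P$ on $\mathcal{X}\times\mathcal{Y}$, the population risk is $R_{\rm pop}(\mathcal{A}_\mathcal{S})=\mathbb{E}_{(x,y)\sim P}[\ell(\mathcal{A}_\mathcal{S}(x),y)]$ and the empirical risk is $R_{\rm emp}(\mathcal{A}_\mathcal{S})=\frac1n\sum_{i=1}^n \ell(\mathcal{A}_\mathcal{S}(x_i),y_i)$. The algorithm $\mathcal{A}$ is uniformly $\gamma$-stable if for every training set $\mathcal{S}=\{(x_1,y_1),\ldots,(x_n,y_n)\}$,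 every index $i$, every training set $\mathcal{S}^i$ obtained from $\mathcal{S}$ by replacing $(x_i,y_i)$ with an arbitrary $(x_i',y_i')$, and every $(x,y)\in\mathcal{X}\times\mathcal{Y}$, one has $|\ell(\mathcal{A}_\mathcal{S}(x),y)-\ell(\mathcal{A}_{\mathcal{S}^i}(x),y)|\le\gamma$. *)

theory Defs
  imports "HOL-Probability.Probability"
begin

text \<open>Training sets of size n are functions S :: nat => 'x * 'y, of which only
  the values S 0, ..., S (n-1) are relevant.\<close>

definition pop_risk ::
  "('y \<Rightarrow> 'y \<Rightarrow> real) \<Rightarrow> ('x \<times> 'y) pmf \<Rightarrow> ('x \<Rightarrow> 'y) \<Rightarrow> real" where
  "pop_risk loss P h = measure_pmf.expectation P (\<lambda>(x, y). loss (h x) y)"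

definition emp_risk ::
  "('y \<Rightarrow> 'y \<Rightarrow> real) \<Rightarrow> nat \<Rightarrow> (nat \<Rightarrow> 'x \<times> 'y) \<Rightarrow> ('x \<Rightarrow> 'y) \<Rightarrow> real" where
  "emp_risk loss n S h = (1 / real n) * (\<Sum>i<n. loss (h (fst (S i))) (snd (S i)))"

definition uniformly_stable ::
  "('y \<Rightarrow> 'y \<Rightarrow> real) \<Rightarrow> ('x \<times> 'y) set \<Rightarrow> nat \<Rightarrow> ((nat \<Rightarrow> 'x \<times> 'y) \<Rightarrow> 'x \<Rightarrow> 'y) \<Rightarrow> real \<Rightarrow> bool" where
  "uniformly_stable loss Z n A \<gamma> \<longleftrightarrow>
     (\<forall>S. (\<forall>j<n. S j \<in> Z) \<longrightarrow>
       (\<forall>i<n. \<forall>z'\<in>Z. \<forall>x y.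
          \<bar>loss (A S x) y - loss (A (S(i := z')) x) y\<bar> \<le> \<gamma>))"

definition iid_sample :: "nat \<Rightarrow> 'z pmf \<Rightarrow> (nat \<Rightarrow> 'z) pmf" where
  "iid_sample n P = Pi_pmf {..<n} undefined (\<lambda>_. P)"

end

theory Submission
  imports Defs
begin


lemma aux1: "(f::real) \<noteq> 0 \<Longrightarrow> x+1 \<noteq> 0 \<Longrightarrow> (2*(x+1))*(2*x+1)*F/(((x+1)*f)*((x+1)*f))*(x+1) = F/(f*f)*(2*(2*x+1))"
  by (simp add: divide_simps) (simp add: algebra_simps)
lemma aux2: "(f::real) \<noteq> 0 \<Longrightarrow> x+1 \<noteq> 0 \<Longrightarrow> (2*x+1)*F/(f*((x+1)*f))*(x+1) = F/(f*f)*(2*x+1)"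
  by (simp add: divide_simps)

lemma cb_step: "real ((2*(Suc m)) choose (Suc m)) * (real m + 1) = real ((2*m) choose m) * (2*(2*real m + 1))"
proof -
  have e: "2 * Suc m = Suc (Suc (2*m))" by simp
  have h1: "real ((2*(Suc m)) choose (Suc m)) = fact (2*m+2) / (fact (m+1) * fact (m+1))"
    by (subst binomial_fact) auto
  have h2: "real ((2*m) choose m) = fact (2*m) / (fact m * fact m)"
    by (subst binomial_fact) auto
  have h3: "fact (2*m+2) = (2*(real m+1))*(2*real m+1) * (fact (2*m) :: real)"
    by (simp add: algebra_simps)
  have h4: "fact (m+1) = (real m + 1) * (fact m :: real)" by (simp add: algebra_simps)
  have p1: "fact m \<noteq> (0::real)" by simp
  have p2: "real m + 1 \<noteq> 0" by simp
  show ?thesis unfolding h1 h2 h3 h4 by (rule aux1[OF p1 p2])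
qed

lemma cb_even: "real ((2*m) choose m)^2 * (3*real m+1) \<le> 16^m"
proof (induction m)
  case 0 then show ?case by simp
next
  case (Suc m)
  define c where "c = real ((2*m) choose m)"
  define d where "d = real ((2*(Suc m)) choose (Suc m))"
  have cd: "d * (real m + 1) = c * (2*(2*real m+1))" using cb_step unfolding c_def d_def by simp
  have IH: "c^2 * (3*real m + 1) \<le> 16^m" using Suc unfolding c_def .
  have e: "(d * (real m + 1))^2 = (c * (2*(2*real m+1)))^2" using cd by simp
  have e2: "d^2 * (real m + 1)^2 = c^2 * (2^2*(2*real m+1)^2)"
    using e by (simp only: power_mult_distrib)
  have "d^2 * (real m + 1)^2 * (3*real m + 4) = c^2 * (4*(2*real m+1)^2) * (3*real m + 4)"
    unfolding e2 by simp
  also have "\<dots> \<le> c^2 * (16 * (real m+1)^2 * (3 * real m + 1))"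
  proof -
    have "4*(2*real m+1)^2 * (3*real m + 4) \<le> 16 * (real m+1)^2 * (3 * real m + 1)"
      by (simp add: power2_eq_square algebra_simps)
    from mult_left_mono[OF this, of "c^2"] show ?thesis by (simp add: mult.assoc)
  qed
  also have "\<dots> = 16 * (real m+1)^2 * (c^2 * (3 * real m + 1))" by (simp add: algebra_simps)
  also have "\<dots> \<le> 16 * (real m+1)^2 * 16^m" using IH by (intro mult_left_mono) auto
  finally have "(real m + 1)^2 * (d^2 * (3*real m + 4)) \<le> (real m + 1)^2 * 16^(Suc m)"
    by (simp add: algebra_simps)
  then have "d^2 * (3*real m + 4) \<le> 16^(Suc m)"
    by (rule mult_left_le_imp_le) auto
  then show ?case unfolding d_def by (simp add: algebra_simps)
qed

lemma cb_all: "real (n choose (n div 2))^2 * (real n+1) \<le> 4^n"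
proof (cases "even n")
  case True
  then obtain m where n: "n = 2*m" by blast
  have "real ((2*m) choose m)^2 * (real n+1) \<le> real ((2*m) choose m)^2 * (3*real m+1)"
    using n by (intro mult_left_mono) auto
  also have "\<dots> \<le> 16^m" by (rule cb_even)
  also have "\<dots> = 4^n" using n by (simp add: power_mult)
  finally show ?thesis using n by simp
next
  case False
  define m where "m = n div 2"
  have n: "n = Suc (2*m)" using False unfolding m_def by presburger
  have nd: "n div 2 = m" using n by simp
  have st: "real (Suc (2*m) choose m) * (real m + 1) = real ((2*m) choose m) * (2*real m + 1)"
  proof -
    have h1: "real (Suc (2*m) choose m) = fact (2*m+1) / (fact m * fact (m+1))"
      by (subst binomial_fact) (auto simp: Suc_diff_le)
    have h2: "real ((2*m) choose m) = fact (2*m) / (fact m * fact m)"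
      by (subst binomial_fact) auto
    have h3: "fact (2*m+1) = (2*real m+1) * (fact (2*m) :: real)"
      by (simp add: algebra_simps)
    have h4: "fact (m+1) = (real m + 1) * (fact m :: real)" by (simp add: algebra_simps)
    have p1: "fact m \<noteq> (0::real)" by simp
    have p2: "real m + 1 \<noteq> 0" by simp
    show ?thesis unfolding h1 h2 h3 h4 by (rule aux2[OF p1 p2])
  qed
  define c where "c = real ((2*m) choose m)"
  define d where "d = real (Suc (2*m) choose m)"
  have cd: "d * (real m + 1) = c * (2*real m+1)" using st unfolding c_def d_def by simp
  have IH: "c^2 * (3*real m + 1) \<le> 16^m" using cb_even unfolding c_def .
  have e: "(d * (real m + 1))^2 = (c * (2*real m+1))^2" using cd by simp
  have e2: "d^2 * (real m + 1)^2 = c^2 * (2*real m+1)^2"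
    using e by (simp only: power_mult_distrib)
  have "(real m + 1)^2 * (d^2 * (2*real m + 2)) = (d^2 * (real m + 1)^2) * (2*real m + 2)"
    by (simp add: mult_ac)
  also have "\<dots> = c^2 * (2*real m+1)^2 * (2*real m + 2)"
    unfolding e2 by (rule refl)
  also have "\<dots> \<le> c^2 * (4 * (real m + 1)^2 * (3*real m + 1))"
  proof -
    have "(2*real m+1)^2 * (2*real m + 2) \<le> 4 * (real m + 1)^2 * (3*real m + 1)"
      by (simp add: power2_eq_square algebra_simps)
    from mult_left_mono[OF this, of "c^2"] show ?thesis by (simp add: mult.assoc)
  qed
  also have "\<dots> = 4 * (real m+1)^2 * (c^2 * (3 * real m + 1))" by (simp add: algebra_simps)
  also have "\<dots> \<le> 4 * (real m+1)^2 * 16^m" using IH by (intro mult_left_mono) auto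
  finally have "(real m + 1)^2 * (d^2 * (2*real m + 2)) \<le> (real m + 1)^2 * (4 * 16^m)"
    by (simp add: algebra_simps)
  then have "d^2 * (2*real m + 2) \<le> 4 * 16^m"
    by (rule mult_left_le_imp_le) auto
  moreover have "(4::real)^n = 4 * 16^m" using n by (simp add: power_mult)
  moreover have "real (n choose (n div 2))^2 * (real n + 1) = d^2 * (2*real m + 2)"
    unfolding d_def nd n by simp
  ultimately show ?thesis by simp
qed



lemma central_bound: "real (n choose (n div 2)) / 2^n \<le> 1 / sqrt (real n + 1)"
proof -
  have f: "(2::real)^n * 2^n = 4^n" by (simp add: power_mult_distrib[symmetric])
  have "real (n choose (n div 2))^2 * (real n+1) \<le> (2^n)^2"
    using cb_all[of n] f by (simp add: power2_eq_square)
  then have "sqrt (real (n choose (n div 2))^2 * (real n+1)) \<le> sqrt ((2^n)^2)"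
    by (rule real_sqrt_le_mono)
  then have "real (n choose (n div 2)) * sqrt (real n + 1) \<le> 2^n"
    by (simp add: real_sqrt_mult)
  moreover have "sqrt (real n + 1) > 0" by simp
  ultimately show ?thesis by (simp add: field_simps)
qed

lemma card_window:
  fixes x w :: real assumes "0 \<le> w"
  shows "real (card {k::nat. x - w < real k \<and> real k < x + w}) \<le> 2*w + 1"
proof -
  define a where "a = nat \<lceil>x - w\<rceil>"
  define b where "b = nat \<lfloor>x + w\<rfloor>"
  have sub: "{k::nat. x - w < real k \<and> real k < x + w} \<subseteq> {a..b}"
  proof
    fix k assume k: "k \<in> {k::nat. x - w < real k \<and> real k < x + w}"
    have "a \<le> k" unfolding a_def using k by (simp add: nat_le_iff ceiling_le_iff)
    moreover have "k \<le> b" unfolding b_def using k by (simp add: le_nat_iff le_floor_iff)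
    ultimately show "k \<in> {a..b}" by simp
  qed
  have "card {k::nat. x - w < real k \<and> real k < x + w} \<le> card {a..b}"
    by (rule card_mono[OF _ sub]) simp
  moreover have "real (card {a..b}) \<le> 2*w + 1"
  proof (cases "a \<le> b")
    case False then show ?thesis using assms by simp
  next
    case True
    have rb: "real b \<le> x + w" if "x + w \<ge> 0" unfolding b_def using that by linarith
    have ra: "real a \<ge> x - w" unfolding a_def by linarith
    show ?thesis
    proof (cases "x + w \<ge> 0")
      case True2: True
      then show ?thesis using True ra rb by (simp add: of_nat_diff)
    next
      case False
      then have "b = 0" unfolding b_def by linarith
      then show ?thesis using True assms by simp
    qed
  qed
  ultimately show ?thesis by linarith
qed


lemma binom_tail:
  assumes n1: "n \<ge> 1"
  shows "measure_pmf.prob (binomial_pmf n (1/2)) {k. real k \<le> real n/2 - sqrt (real n)/32} \<ge> 3/64"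
proof -
  define w where "w = sqrt (real n)/32"
  have w0: "w \<ge> 0" unfolding w_def by simp
  have wpos: "w > 0" unfolding w_def using n1 by simp
  define Lo where "Lo = {k\<in>{..n}. real k \<le> real n/2 - w}"
  define Hi where "Hi = {k\<in>{..n}. real k \<ge> real n/2 + w}"
  define Mi where "Mi = {k\<in>{..n}. real n/2 - w < real k \<and> real k < real n/2 + w}"
  define c where "c k = real (n choose k) / 2^n" for k
  have pmfc: "pmf (binomial_pmf n (1/2)) k = c k" if "k \<le> n" for k
  proof -
    have "(1/2::real)^k * (1/2)^(n-k) = (1/2)^n" using that by (simp add: power_add[symmetric])
    then show ?thesis unfolding c_def by (simp add: power_divide)
  qed
  have "measure_pmf.prob (binomial_pmf n (1/2)) Lo \<le> measure_pmf.prob (binomial_pmf n (1/2)) {k. real k \<le> real n/2 - sqrt (real n)/32}"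
    by (rule measure_pmf.finite_measure_mono) (auto simp: Lo_def w_def)
  moreover have "measure_pmf.prob (binomial_pmf n (1/2)) Lo = sum c Lo"
    by (subst measure_measure_pmf_finite) (auto simp del: pmf_binomial simp: Lo_def pmfc intro!: sum.cong)
  moreover have "sum c Lo \<ge> 3/64"
  proof -
    have HiLo: "sum c Hi = sum c Lo"
    proof -
      have "Hi = (\<lambda>k. n - k) ` Lo"
      proof
        show "Hi \<subseteq> (\<lambda>k. n - k) ` Lo"
        proof
          fix k assume k: "k \<in> Hi"
          then have "n - k \<in> Lo" "k = n - (n - k)" unfolding Hi_def Lo_def by (auto simp: of_nat_diff)
          then show "k \<in> (\<lambda>k. n - k) ` Lo" by blast
        qed
        show "(\<lambda>k. n - k) ` Lo \<subseteq> Hi" unfolding Hi_def Lo_def by (auto simp: of_nat_diff)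
      qed
      moreover have "inj_on (\<lambda>k. n - k) Lo" unfolding Lo_def by (auto intro!: inj_onI)
      ultimately have "sum c Hi = sum (c \<circ> (\<lambda>k. n - k)) Lo" by (simp add: sum.reindex)
      also have "\<dots> = sum c Lo" unfolding Lo_def c_def
        by (intro sum.cong) (auto simp: binomial_symmetric[symmetric])
      finally show ?thesis .
    qed
    have split: "{..n} = Lo \<union> Mi \<union> Hi" unfolding Lo_def Mi_def Hi_def by auto
    have "sum c {..n} = 1" unfolding c_def by (simp add: sum_divide_distrib[symmetric] choose_row_sum of_nat_sum[symmetric])
    also have "sum c {..n} = sum c Lo + sum c Mi + sum c Hi"
    proof -
      have fin: "finite Lo" "finite Mi" "finite Hi" unfolding Lo_def Mi_def Hi_def by auto
      have d1: "(Lo \<union> Mi) \<inter> Hi = {}" "Lo \<inter> Mi = {}" using wpos unfolding Lo_def Mi_def Hi_def by auto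
      have f2: "finite (Lo \<union> Mi)" using fin by simp
      show ?thesis unfolding split
        by (simp only: sum.union_disjoint[OF f2 fin(3) d1(1)] sum.union_disjoint[OF fin(1,2) d1(2)])
    qed
    finally have tot: "2 * sum c Lo + sum c Mi = 1" using HiLo by simp
    have "sum c Mi \<le> sum (\<lambda>_. 1 / sqrt (real n + 1)) Mi"
    proof (rule sum_mono)
      fix k assume "k \<in> Mi"
      have "c k \<le> real (n choose (n div 2)) / 2^n" unfolding c_def
        by (intro divide_right_mono) (auto simp: binomial_maximum)
      also have "\<dots> \<le> 1 / sqrt (real n + 1)" by (rule central_bound)
      finally show "c k \<le> 1 / sqrt (real n + 1)" .
    qed
    also have "\<dots> = real (card Mi) / sqrt (real n + 1)" by simp
    also have "\<dots> \<le> (2*w+1) / sqrt (real n + 1)"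
    proof (rule divide_right_mono)
      have "Mi \<subseteq> {k::nat. real n/2 - w < real k \<and> real k < real n/2 + w}" unfolding Mi_def by auto
      then have "card Mi \<le> card {k::nat. real n/2 - w < real k \<and> real k < real n/2 + w}"
      proof (rule card_mono[rotated])
        have "{k::nat. real n/2 - w < real k \<and> real k < real n/2 + w} \<subseteq> {..nat \<lceil>real n/2 + w\<rceil>}"
          by (auto simp: le_nat_iff) linarith
        then show "finite {k::nat. real n/2 - w < real k \<and> real k < real n/2 + w}" by (rule finite_subset) simp
      qed
      then show "real (card Mi) \<le> 2*w+1" using card_window[OF w0, of "real n/2"] by linarith
    qed simp
    also have "\<dots> = sqrt (real n) / sqrt (real n + 1) / 16 + 1 / sqrt (real n + 1)"
      unfolding w_def by (simp add: field_simps)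
    also have "\<dots> \<le> 1/16 + 5/7"
    proof -
      have "sqrt (real n) \<le> sqrt (real n + 1)" by simp
      then have a: "sqrt (real n) / sqrt (real n + 1) \<le> 1"
        by (simp add: divide_le_eq_1)
      have "sqrt 2 \<le> sqrt (real n + 1)" using n1 by simp
      moreover have "7/5 \<le> sqrt (2::real)" by (rule real_le_rsqrt) (simp add: power2_eq_square)
      ultimately have "7/5 \<le> sqrt (real n + 1)" by linarith
      then have b: "1 / sqrt (real n + 1) \<le> 5/7" by (simp add: field_simps)
      from a have "sqrt (real n) / sqrt (real n + 1) / 16 \<le> 1/16" by simp
      with b show ?thesis by linarith
    qed
    finally have "sum c Mi \<le> 1/16 + 5/7" .
    with tot show ?thesis by linarith
  qed
  ultimately show ?thesis by linarith
qed



theorem theorem2: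
  fixes \<gamma> L :: real and n :: nat
  assumes "0 < \<gamma>" and "\<gamma> \<le> L" and "n \<ge> 1"
  shows "\<exists>(Z :: (real \<times> real) set) (P :: (real \<times> real) pmf)
            (loss :: real \<Rightarrow> real \<Rightarrow> real)
            (A :: (nat \<Rightarrow> real \<times> real) \<Rightarrow> real \<Rightarrow> real).
           set_pmf P \<subseteq> Z \<and>
           (\<forall>a b. 0 \<le> loss a b \<and> loss a b \<le> L) \<and>
           uniformly_stable loss Z n A \<gamma> \<and>
           measure_pmf.prob (iid_sample n P)
             {S. pop_risk loss P (A S) - emp_risk loss n S (A S)
                   \<ge> \<gamma> / 4 + L / (32 * sqrt (real n))} \<ge> 3 / 64"
proof -
  note g0 = assms(1) and gL = assms(2) and n1 = assms(3)
  define N where "N = 4*n"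
  define U where "U = pmf_of_set {..<N}"
  define B where "B = bernoulli_pmf (1/2)"
  define g where "g = (\<lambda>(m::nat,b::bool). (real m, if b then 1 else (0::real)))"
  define P :: "(real \<times> real) pmf" where "P = map_pmf g (pair_pmf U B)"
  define loss :: "real \<Rightarrow> real \<Rightarrow> real" where "loss = (\<lambda>a b::real. (if a = 1 then 0 else \<gamma>) + (if b = 1 then L - \<gamma> else 0))"
  define A :: "(nat \<Rightarrow> real \<times> real) \<Rightarrow> real \<Rightarrow> real" where "A = (\<lambda>(S::nat \<Rightarrow> real \<times> real) x. if \<exists>i<n. fst (S i) = x then 1 else (0::real))"
  define kS where "kS = (\<lambda>S::nat \<Rightarrow> real \<times> real. card {i\<in>{..<n}. snd (S i) = 1})"
  define s where "s = sqrt (real n)"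
  have s1: "s \<ge> 1" unfolding s_def using n1 by simp
  have ns: "real n = s * s" unfolding s_def by simp
  have "0 \<in> {..<N}" unfolding N_def using n1 by simp
  then have Nne: "{..<N} \<noteq> {}" by auto

  have lossb: "\<forall>a b. 0 \<le> loss a b \<and> loss a b \<le> L" unfolding loss_def using g0 gL by auto
  have stab: "uniformly_stable loss (UNIV :: (real \<times> real) set) n A \<gamma>"
    unfolding uniformly_stable_def loss_def using g0 by auto

  have emp: "emp_risk loss n S (A S) = (L - \<gamma>) * real (kS S) / real n" for S
  proof -
    have "(\<Sum>i<n. loss (A S (fst (S i))) (snd (S i))) = (\<Sum>i<n. if snd (S i) = 1 then L - \<gamma> else 0)"
      by (rule sum.cong) (auto simp: loss_def A_def)
    also have "\<dots> = (L - \<gamma>) * real (kS S)"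
      unfolding kS_def by (simp add: sum.If_cases Int_def)
    finally show ?thesis unfolding emp_risk_def by simp
  qed

  have pop: "pop_risk loss P (A S) \<ge> 3*\<gamma>/4 + (L - \<gamma>)/2" for S
  proof -
    define f1 where "f1 = (\<lambda>m::nat. if A S (real m) = 1 then 0 else \<gamma>)"
    define f2 where "f2 = (\<lambda>b::bool. if b then L - \<gamma> else 0)"
    have fin: "finite (set_pmf (pair_pmf U B))" unfolding U_def B_def using Nne by auto
    have "pop_risk loss P (A S) = measure_pmf.expectation (pair_pmf U B) (\<lambda>z. f1 (fst z) + f2 (snd z))"
      unfolding pop_risk_def P_def
      by (simp add: g_def case_prod_unfold loss_def f1_def f2_def) (intro Bochner_Integration.integral_cong refl, auto)
    also have "\<dots> = measure_pmf.expectation (pair_pmf U B) (\<lambda>z. f1 (fst z)) +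
                     measure_pmf.expectation (pair_pmf U B) (\<lambda>z. f2 (snd z))"
      by (rule Bochner_Integration.integral_add) (auto intro: integrable_measure_pmf_finite[OF fin])
    also have "\<dots> = measure_pmf.expectation U f1 + measure_pmf.expectation B f2" by simp
    also have "measure_pmf.expectation B f2 = (L - \<gamma>)/2" unfolding B_def f2_def by simp
    also have "measure_pmf.expectation U f1 = sum f1 {..<N} / real N"
      unfolding U_def using Nne by (simp add: integral_pmf_of_set)
    finally have eq: "pop_risk loss P (A S) = sum f1 {..<N} / real N + (L - \<gamma>)/2" .
    define T where "T = {m::nat. \<exists>i<n. fst (S i) = real m}"
    have Tsub: "T \<subseteq> (\<lambda>i. nat \<lfloor>fst (S i)\<rfloor>) ` {..<n}" unfolding T_def by force
    have finT: "finite T" by (rule finite_subset[OF Tsub]) simp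
    have "card T \<le> card ((\<lambda>i. nat \<lfloor>fst (S i)\<rfloor>) ` {..<n})" by (rule card_mono[OF _ Tsub]) simp
    also have "\<dots> \<le> card {..<n}" by (rule card_image_le) simp
    finally have cT: "card T \<le> n" by simp
    have "sum f1 {..<N} = (\<Sum>m\<in>{..<N}. if m \<in> T then 0 else \<gamma>)"
      by (rule sum.cong) (auto simp: f1_def A_def T_def)
    also have "\<dots> = \<gamma> * real (card ({..<N} - T))"
      by (simp add: sum.If_cases Diff_eq)
    finally have sf: "sum f1 {..<N} = \<gamma> * real (card ({..<N} - T))" .
    have "card {..<N} - card T \<le> card ({..<N} - T)" by (rule diff_card_le_card_Diff[OF finT])
    then have "N - n \<le> card ({..<N} - T)" using cT by simp
    moreover have "n \<le> N" unfolding N_def by simp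
    ultimately have "real N - real n \<le> real (card ({..<N} - T))"
      by (metis of_nat_diff of_nat_le_iff)
    then have "\<gamma> * (real N - real n) \<le> sum f1 {..<N}" unfolding sf using g0 by simp
    then have "\<gamma> * (real N - real n) / real N \<le> sum f1 {..<N} / real N"
      by (rule divide_right_mono) simp
    moreover have "\<gamma> * (real N - real n) / real N = 3*\<gamma>/4" unfolding N_def using n1 by (simp add: field_simps)
    ultimately show ?thesis unfolding eq by linarith
  qed

  have gap: "\<gamma> / 4 + L / (32 * sqrt (real n)) \<le> pop_risk loss P (A S) - emp_risk loss n S (A S)"
    if k: "real (kS S) \<le> real n / 2 - s / 32" for S
  proof -
    have "(L - \<gamma>) * real (kS S) / real n \<le> (L - \<gamma>) * (real n / 2 - s / 32) / real n"
      using k gL by (intro divide_right_mono mult_left_mono) auto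
    also have "\<dots> = (L - \<gamma>) / 2 - (L - \<gamma>) / (32 * s)"
      unfolding ns using s1 by (simp add: field_simps)
    finally have e: "emp_risk loss n S (A S) \<le> (L - \<gamma>) / 2 - (L - \<gamma>) / (32 * s)" unfolding emp .
    have "\<gamma> / (32 * s) \<le> \<gamma> / 2" using s1 g0 by (simp add: field_simps)
    moreover have "L / (32 * s) = (L-\<gamma>) / (32 * s) + \<gamma> / (32 * s)" by (simp add: add_divide_distrib[symmetric])
    ultimately show ?thesis using e pop[of S] unfolding s_def by linarith
  qed

  define h where "h = (\<lambda>z::real \<times> real. snd z = 1)"
  have hP: "map_pmf h P = B"
  proof -
    have "map_pmf h P = map_pmf (h \<circ> g) (pair_pmf U B)" unfolding P_def by (simp add: map_pmf_comp comp_def)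
    also have "h \<circ> g = snd" unfolding h_def g_def by (auto simp: fun_eq_iff)
    finally show ?thesis by (simp add: map_snd_pair_pmf)
  qed
  have dist: "map_pmf kS (iid_sample n P) = binomial_pmf n (1/2)"
  proof -
    have "map_pmf kS (iid_sample n P) = map_pmf (\<lambda>f. card {x\<in>{..<n}. f x}) (map_pmf (\<lambda>S. h \<circ> S) (iid_sample n P))"
      by (simp add: map_pmf_comp kS_def h_def)
    also have "map_pmf (\<lambda>S. h \<circ> S) (iid_sample n P) = Pi_pmf {..<n} (h undefined) (\<lambda>_. map_pmf h P)"
      unfolding iid_sample_def by (rule Pi_pmf_map[symmetric]) auto
    also have "\<dots> = Pi_pmf {..<n} (h undefined) (\<lambda>_. bernoulli_pmf (1/2))" unfolding hP B_def ..
    also have "map_pmf (\<lambda>f. card {x\<in>{..<n}. f x}) \<dots> = binomial_pmf n (1/2)"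
      by (rule binomial_pmf_altdef'[symmetric]) auto
    finally show ?thesis .
  qed
  have "3/64 \<le> measure_pmf.prob (binomial_pmf n (1/2)) {k. real k \<le> real n/2 - sqrt (real n)/32}"
    by (rule binom_tail[OF n1])
  also have "\<dots> = measure_pmf.prob (iid_sample n P) {S. real (kS S) \<le> real n / 2 - s / 32}"
    unfolding dist[symmetric] s_def by simp
  also have "\<dots> \<le> measure_pmf.prob (iid_sample n P)
             {S. pop_risk loss P (A S) - emp_risk loss n S (A S) \<ge> \<gamma> / 4 + L / (32 * sqrt (real n))}"
    by (rule measure_pmf.finite_measure_mono) (auto intro: gap)
  finally have pr: "3/64 \<le> \<dots>" .
  show ?thesis
    by (rule exI[of _ UNIV], rule exI[of _ P], rule exI[of _ loss], rule exI[of _ A]) (use lossb stab pr in auto)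
qed


end
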